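(* Let $G,H$ be graded groups, $U\subset G$ open, $\Phi:U\to H$ a smooth map and $x\in U$ (no Pansu differentiability or filtration-preservation is assumed). Then for all $i,j\ge1$ and $V\in\mathfrak g_j$, $$\lim_{\varepsilon\to0^+}\varepsilon^{-i}\,\mathrm{pr}_{\mathfrak h,i}\circ\ln_H\big(\Phi_x(\exp_G(\varepsilon^jV))\big)=\begin{cases}0&\text{if } j>i,\\ \mathrm{pr}_{\mathfrak h,i}(\mathfrak d_x\Phi(V))&\text{if } j=i.\end{cases}$$
   Context: A graded group is a connected, simply connected nilpotent real Lie group $G$ whose Lie algebra $\mathfrak g=\bigoplus_{j\ge1}\mathfrak g_j$ (finitely many nonzero) satisfies $[\mathfrak g_i,\mathfrak g_j]\subset\mathfrak g_{i+j}$; $\exp_G$ is a global diffeomorphism with inverse $\ln_G$. $H$ is a graded group with Lie algebra $\mathfrak h=\bigoplus_j\mathfrak h_j$, and $\mathrm{pr}_{\mathfrak h,i}$ denotes the projection onto $\mathfrak h_i$ along $\bigoplus_{j\neq i}\mathfrak h_j$. Notation: $\Phi_x(y):=\Phi(x)^{-1}\Phi(xy)$ (defined when $xy\in U$). $\mathfrak d_x\Phi:=(D_0L_{\Phi(x)})^{-1}\circ D_x\Phi\circ D_0L_x:\mathfrak g\to\mathfrak h$, where $D_0L_x$ is the differential at the identity of the left translation by $x$. *)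

theory Defs
  imports "HOL-Analysis.Analysis"
begin

text \<open>On open sets this is equivalent to being C-infinity.\<close>
definition smooth_on :: "'a::euclidean_space set \<Rightarrow> ('a \<Rightarrow> 'b::real_normed_vector) \<Rightarrow> bool" where
  "smooth_on U f \<longleftrightarrow>
     (\<exists>F. f \<in> F \<and> (\<forall>g\<in>F. continuous_on U g \<and>
        (\<forall>v. \<exists>g'\<in>F. \<forall>y\<in>U. ((\<lambda>t. g (y + t *\<^sub>R v)) has_vector_derivative g' y) (at 0))))"

text \<open>A grading V 1, V 2, ... of a real vector space (V 0 = {0} encodes indexing from 1).\<close>
definition decomp :: "(nat \<Rightarrow> 'a::real_vector set) \<Rightarrow> 'a \<Rightarrow> (nat \<Rightarrow> 'a) \<Rightarrow> bool" where
  "decomp V x c \<longleftrightarrow> (\<forall>k. c k \<in> V k) \<and> finite {k. c k \<noteq> 0} \<and> x = (\<Sum>k\<in>{k. c k \<noteq> 0}. c k)"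

definition graded_decomp :: "(nat \<Rightarrow> 'a::real_vector set) \<Rightarrow> bool" where
  "graded_decomp V \<longleftrightarrow> (\<forall>i. subspace (V i)) \<and> V 0 = {0} \<and> finite {i. V i \<noteq> {0}}
     \<and> (\<forall>x. \<exists>!c. decomp V x c)"

definition grproj :: "(nat \<Rightarrow> 'a::real_vector set) \<Rightarrow> nat \<Rightarrow> 'a \<Rightarrow> 'a" where
  "grproj V i x = (THE c. decomp V x c) i"

text \<open>A graded group in exponential coordinates: the underlying manifold is the Lie algebra
  itself, with identity 0, a smooth associative product for which every line t \<mapsto> t X is a
  one-parameter subgroup (so exp and ln are the identity map), and the Lie bracket
  (computed from the product) respects the grading.\<close>
definition lie_bracket :: "('g::real_normed_vector \<Rightarrow> 'g \<Rightarrow> 'g) \<Rightarrow> 'g \<Rightarrow> 'g \<Rightarrow> 'g" where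
  "lie_bracket m X Y = Lim (at_right 0)
     (\<lambda>t::real. (m (t *\<^sub>R X) (t *\<^sub>R Y) - m (t *\<^sub>R Y) (t *\<^sub>R X)) /\<^sub>R (t ^ 2))"

definition graded_group :: "('g::euclidean_space \<Rightarrow> 'g \<Rightarrow> 'g) \<Rightarrow> (nat \<Rightarrow> 'g set) \<Rightarrow> bool" where
  "graded_group m V \<longleftrightarrow>
     (\<forall>x y z. m (m x y) z = m x (m y z)) \<and>
     (\<forall>x. m 0 x = x \<and> m x 0 = x) \<and>
     (\<forall>X s t. m (s *\<^sub>R X) (t *\<^sub>R X) = (s + t) *\<^sub>R X) \<and>
     smooth_on UNIV (\<lambda>p. m (fst p) (snd p)) \<and>
     graded_decomp V \<and>
     (\<forall>i j X Y. X \<in> V i \<longrightarrow> Y \<in> V j \<longrightarrow> lie_bracket m X Y \<in> V (i + j))"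

text \<open>Phi_x(y) = Phi(x)^{-1} Phi(x y); the group inverse is the additive one in exp. coordinates.\<close>
definition shifted_map :: "('g \<Rightarrow> 'g \<Rightarrow> 'g) \<Rightarrow> ('h::uminus \<Rightarrow> 'h \<Rightarrow> 'h) \<Rightarrow> ('g \<Rightarrow> 'h) \<Rightarrow> 'g \<Rightarrow> 'g \<Rightarrow> 'h" where
  "shifted_map mG mH Phi x y = mH (- Phi x) (Phi (mG x y))"

definition left_diff :: "('g::real_normed_vector \<Rightarrow> 'g \<Rightarrow> 'g) \<Rightarrow> ('h::real_normed_vector \<Rightarrow> 'h \<Rightarrow> 'h) \<Rightarrow> ('g \<Rightarrow> 'h) \<Rightarrow> 'g \<Rightarrow> 'g \<Rightarrow> 'h" where
  "left_diff mG mH Phi x =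
     inv (frechet_derivative (mH (Phi x)) (at 0)) \<circ> frechet_derivative Phi (at x)
       \<circ> frechet_derivative (mG x) (at 0)"

end

theory Submission
  imports Defs
begin


lemma seg_bound:
  fixes f :: "'a::real_normed_vector \<Rightarrow> 'b::real_normed_vector"
  assumes D: "\<And>w. w \<in> U \<Longrightarrow> ((\<lambda>t. f (w + t *\<^sub>R b)) has_vector_derivative Db w) (at 0)"
    and inU: "\<And>t. t \<in> closed_segment 0 c \<Longrightarrow> z + t *\<^sub>R b \<in> U"
    and bnd: "\<And>t. t \<in> closed_segment 0 c \<Longrightarrow> norm (Db (z + t *\<^sub>R b) - q) \<le> e"
  shows "norm (f (z + c *\<^sub>R b) - f z - c *\<^sub>R q) \<le> e * \<bar>c\<bar>"
proof -
  define \<phi> where "\<phi> t = f (z + t *\<^sub>R b) - t *\<^sub>R q" for t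
  have der: "(\<phi> has_vector_derivative (Db (z + t *\<^sub>R b) - q)) (at t)"
    if t: "t \<in> closed_segment 0 c" for t
  proof -
    have w: "((\<lambda>s. f ((z + t *\<^sub>R b) + s *\<^sub>R b)) has_vector_derivative Db (z + t *\<^sub>R b)) (at 0)"
      using D inU t by blast
    have sh: "((\<lambda>s. s - t) has_vector_derivative 1) (at t)"
      by (auto intro!: derivative_eq_intros)
    have "(((\<lambda>s. f ((z + t *\<^sub>R b) + s *\<^sub>R b)) \<circ> (\<lambda>s. s - t)) has_vector_derivative (1 *\<^sub>R Db (z + t *\<^sub>R b))) (at t)"
      by (rule vector_diff_chain_at[OF sh]) (use w in simp)
    moreover have "((\<lambda>s. f ((z + t *\<^sub>R b) + s *\<^sub>R b)) \<circ> (\<lambda>s. s - t)) = (\<lambda>s. f (z + s *\<^sub>R b))"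
      by (auto simp: fun_eq_iff algebra_simps)
    ultimately have "((\<lambda>s. f (z + s *\<^sub>R b)) has_vector_derivative Db (z + t *\<^sub>R b)) (at t)" by simp
    then show ?thesis unfolding \<phi>_def
      by (auto intro!: derivative_eq_intros)
  qed
  have "norm (\<phi> c - \<phi> 0) \<le> e * norm (c - 0)"
  proof (rule differentiable_bound[where f'="\<lambda>t h. h *\<^sub>R (Db (z + t *\<^sub>R b) - q)"])
    show "convex (closed_segment 0 c)" by simp
    show "(\<phi> has_derivative (\<lambda>h. h *\<^sub>R (Db (z + t *\<^sub>R b) - q))) (at t within closed_segment 0 c)"
      if "t \<in> closed_segment 0 c" for t
      using der[OF that] has_derivative_at_withinI has_vector_derivative_def by blast
    show "onorm (\<lambda>h. h *\<^sub>R (Db (z + t *\<^sub>R b) - q)) \<le> e" if "t \<in> closed_segment 0 c" for t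
      using bnd[OF that] by (intro onorm_le) (metis abs_ge_zero mult.commute mult_left_mono norm_scaleR real_norm_def)
  qed auto
  then show ?thesis by (simp add: \<phi>_def algebra_simps)
qed


lemma C1:
  fixes f :: "'a::euclidean_space \<Rightarrow> 'b::real_normed_vector"
  assumes D: "\<And>v w. w \<in> U \<Longrightarrow> ((\<lambda>t. f (w + t *\<^sub>R v)) has_vector_derivative D v w) (at 0)"
    and Dc: "\<And>v. continuous_on U (D v)" and U: "open U" and y: "y \<in> U"
  shows "(f has_derivative (\<lambda>h. \<Sum>b\<in>Basis. (h \<bullet> b) *\<^sub>R D b y)) (at y)"
proof (subst has_derivative_at_alt, intro conjI allI impI)
  show "bounded_linear (\<lambda>h. \<Sum>b\<in>Basis. (h \<bullet> b) *\<^sub>R D b y)"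
    by (intro bounded_linear_sum) (auto intro!: bounded_linear_intros)
  fix e :: real assume e: "e > 0"
  define e' where "e' = e / DIM('a)"
  have e': "e' > 0" using e by (simp add: e'_def)
  obtain r where r: "r > 0" "ball y r \<subseteq> U" using U y openE by blast
  have "\<forall>b\<in>Basis. \<exists>d. d > 0 \<and> (\<forall>z\<in>U. dist z y < d \<longrightarrow> dist (D b z) (D b y) < e')"
  proof
    fix b :: 'a
    from Dc[of b, unfolded continuous_on_iff] y e'
    show "\<exists>d. d > 0 \<and> (\<forall>z\<in>U. dist z y < d \<longrightarrow> dist (D b z) (D b y) < e')"
      by blast
  qed
  then have "\<exists>d. \<forall>b\<in>Basis. d b > 0 \<and> (\<forall>z\<in>U. dist z y < d b \<longrightarrow> dist (D b z) (D b y) < e')"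
    by (rule bchoice)
  then obtain d where dd: "\<forall>b\<in>Basis. d b > 0 \<and> (\<forall>z\<in>U. dist z y < d b \<longrightarrow> dist (D b z) (D b y) < e')"
    by blast
  have d: "\<And>b. b \<in> Basis \<Longrightarrow> d b > 0"
    "\<And>b z. b \<in> Basis \<Longrightarrow> z \<in> U \<Longrightarrow> dist z y < d b \<Longrightarrow> dist (D b z) (D b y) < e'"
    using dd by auto
  define \<delta> where "\<delta> = Min (insert r (d ` Basis))"
  have \<delta>: "\<delta> > 0" unfolding \<delta>_def using r d by (auto simp: Min_gr_iff)
  have \<delta>r: "\<delta> \<le> r" unfolding \<delta>_def by (rule Min_le) auto
  have \<delta>d: "\<And>b. b \<in> Basis \<Longrightarrow> \<delta> \<le> d b" unfolding \<delta>_def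
    by (rule Min_le) (auto simp del: Min_insert)
  have main: "\<forall>c. (\<Sum>b\<in>B. \<bar>c b\<bar>) < \<delta> \<longrightarrow>
     norm (f (y + (\<Sum>b\<in>B. c b *\<^sub>R b)) - f y - (\<Sum>b\<in>B. c b *\<^sub>R D b y)) \<le> e' * (\<Sum>b\<in>B. \<bar>c b\<bar>)"
    if "finite B" "B \<subseteq> Basis" for B
    using that
  proof (induction B rule: finite_induct)
    case empty
    then show ?case by simp
  next
    case (insert a B)
    have a: "a \<in> Basis" and B: "B \<subseteq> Basis" using insert.prems by auto
    show ?case
    proof (intro allI impI)
      fix c :: "'a \<Rightarrow> real"
      assume lt: "(\<Sum>b\<in>insert a B. \<bar>c b\<bar>) < \<delta>"
      define S where "S = (\<Sum>b\<in>B. c b *\<^sub>R b)"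
      have sumins: "(\<Sum>b\<in>insert a B. \<bar>c b\<bar>) = \<bar>c a\<bar> + (\<Sum>b\<in>B. \<bar>c b\<bar>)"
        using insert.hyps by simp
      have nS: "norm S \<le> (\<Sum>b\<in>B. \<bar>c b\<bar>)"
      proof -
        have "norm S \<le> (\<Sum>b\<in>B. norm (c b *\<^sub>R b))" unfolding S_def by (rule norm_sum)
        also have "\<dots> = (\<Sum>b\<in>B. \<bar>c b\<bar>)" using B by (intro sum.cong) auto
        finally show ?thesis .
      qed
      have lt2: "(\<Sum>b\<in>B. \<bar>c b\<bar>) < \<delta>" using lt sumins by simp
      have IH: "norm (f (y + S) - f y - (\<Sum>b\<in>B. c b *\<^sub>R D b y)) \<le> e' * (\<Sum>b\<in>B. \<bar>c b\<bar>)"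
        unfolding S_def using insert.IH[OF B] lt2 by blast
      have pt: "y + S + t *\<^sub>R a \<in> U \<and> dist (y + S + t *\<^sub>R a) y < d a" if t: "t \<in> closed_segment 0 (c a)" for t
      proof -
        have ta: "\<bar>t\<bar> \<le> \<bar>c a\<bar>" using t by (auto simp: closed_segment_eq_real_ivl split: if_splits)
        have "dist (y + S + t *\<^sub>R a) y = norm (S + t *\<^sub>R a)" by (simp add: dist_norm)
        also have "\<dots> \<le> norm S + norm (t *\<^sub>R a)" by (rule norm_triangle_ineq)
        also have "norm (t *\<^sub>R a) = \<bar>t\<bar>" using a by simp
        also have "norm S + \<bar>t\<bar> < \<delta>" using nS ta lt sumins by linarith
        finally have dl: "dist (y + S + t *\<^sub>R a) y < \<delta>" .
        then have d1: "dist y (y + S + t *\<^sub>R a) < r" using \<delta>r by (simp add: dist_commute)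
        then have "y + S + t *\<^sub>R a \<in> U" using r(2) by (meson mem_ball subsetD)
        moreover have "dist (y + S + t *\<^sub>R a) y < d a" using dl \<delta>d[OF a] by linarith
        ultimately show ?thesis by blast
      qed
      have seg: "norm (f (y + S + c a *\<^sub>R a) - f (y + S) - c a *\<^sub>R D a y) \<le> e' * \<bar>c a\<bar>"
      proof (rule seg_bound[where U=U and Db="D a" and f=f and z="y + S" and b=a and c="c a" and q="D a y" and e=e'])
        show "\<And>w. w \<in> U \<Longrightarrow> ((\<lambda>t. f (w + t *\<^sub>R a)) has_vector_derivative D a w) (at 0)"
          using D by blast
        show "y + S + t *\<^sub>R a \<in> U" if "t \<in> closed_segment 0 (c a)" for t using pt[OF that] by blast
        show "norm (D a (y + S + t *\<^sub>R a) - D a y) \<le> e'" if "t \<in> closed_segment 0 (c a)" for t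
          using pt[OF that] d(2)[OF a] by (simp add: dist_norm less_imp_le)
      qed
      have eq: "f (y + (\<Sum>b\<in>insert a B. c b *\<^sub>R b)) - f y - (\<Sum>b\<in>insert a B. c b *\<^sub>R D b y)
          = (f (y + S + c a *\<^sub>R a) - f (y + S) - c a *\<^sub>R D a y) + (f (y + S) - f y - (\<Sum>b\<in>B. c b *\<^sub>R D b y))"
        using insert.hyps by (simp add: S_def algebra_simps)
      show "norm (f (y + (\<Sum>b\<in>insert a B. c b *\<^sub>R b)) - f y - (\<Sum>b\<in>insert a B. c b *\<^sub>R D b y))
          \<le> e' * (\<Sum>b\<in>insert a B. \<bar>c b\<bar>)"
        unfolding eq sumins
        using norm_triangle_ineq[of "f (y + S + c a *\<^sub>R a) - f (y + S) - c a *\<^sub>R D a y"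
            "f (y + S) - f y - (\<Sum>b\<in>B. c b *\<^sub>R D b y)"] seg IH
        by (simp add: distrib_left)
    qed
  qed
  have DIM: "real DIM('a) > 0" by simp
  show "\<exists>d>0. \<forall>y'. norm (y' - y) < d \<longrightarrow>
      norm (f y' - f y - (\<Sum>b\<in>Basis. ((y' - y) \<bullet> b) *\<^sub>R D b y)) \<le> e * norm (y' - y)"
  proof (intro exI[of _ "\<delta> / DIM('a)"] conjI allI impI)
    show "\<delta> / DIM('a) > 0" using \<delta> by simp
    fix y' assume ny: "norm (y' - y) < \<delta> / DIM('a)"
    define h where "h = y' - y"
    have sb: "(\<Sum>b\<in>Basis. \<bar>h \<bullet> b\<bar>) \<le> DIM('a) * norm h"
    proof -
      have "(\<Sum>b\<in>Basis. \<bar>h \<bullet> b\<bar>) \<le> (\<Sum>b\<in>(Basis::'a set). norm h)"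
        by (intro sum_mono Basis_le_norm)
      then show ?thesis by simp
    qed
    have "(\<Sum>b\<in>Basis. \<bar>h \<bullet> b\<bar>) < \<delta>"
      using sb ny DIM unfolding h_def by (simp add: field_simps)
    from main[OF finite_Basis order_refl, rule_format, OF this]
    have "norm (f (y + h) - f y - (\<Sum>b\<in>Basis. (h \<bullet> b) *\<^sub>R D b y)) \<le> e' * (\<Sum>b\<in>Basis. \<bar>h \<bullet> b\<bar>)"
      by (simp add: euclidean_representation)
    also have "\<dots> \<le> e' * (DIM('a) * norm h)" using sb e' by (intro mult_left_mono) auto
    also have "\<dots> = e * norm h" using DIM by (simp add: e'_def)
    finally show "norm (f y' - f y - (\<Sum>b\<in>Basis. ((y' - y) \<bullet> b) *\<^sub>R D b y)) \<le> e * norm (y' - y)"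
      by (simp add: h_def)
  qed
qed



lemma lim_lemma:
  fixes g :: "real \<Rightarrow> 'h::real_normed_vector" and P :: "'h \<Rightarrow> 'h"
  assumes g: "(g has_derivative (\<lambda>t. t *\<^sub>R w)) (at 0)" and g0: "g 0 = 0"
    and P: "bounded_linear P" and ij: "i \<le> j" "1 \<le> j"
  shows "((\<lambda>\<epsilon>. inverse (\<epsilon> ^ i) *\<^sub>R P (g (\<epsilon> ^ j))) \<longlongrightarrow> (if j = i then P w else 0)) (at_right 0)"
proof -
  interpret P: bounded_linear P by (rule P)
  define r where "r s = (g s - s *\<^sub>R w) /\<^sub>R s" for s
  have "(\<lambda>h. norm (g (0 + h) - g 0 - h *\<^sub>R w) / norm h) \<midarrow>0\<rightarrow> 0"
    using g unfolding has_derivative_at by blast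
  then have "((\<lambda>h. norm (r h)) \<longlongrightarrow> 0) (at 0)"
    by (simp add: r_def g0 divide_inverse mult.commute)
  then have r0: "(r \<longlongrightarrow> 0) (at 0)" by (simp add: tendsto_norm_zero_iff)
  have lp: "filterlim (\<lambda>\<epsilon>::real. \<epsilon> ^ j) (at 0) (at_right 0)"
    unfolding filterlim_at
  proof
    show "\<forall>\<^sub>F \<epsilon>::real in at_right 0. \<epsilon> ^ j \<in> UNIV \<and> \<epsilon> ^ j \<noteq> 0"
      by (rule eventually_at_rightI[of 0 "1::real"]) simp_all
    have "((\<lambda>\<epsilon>::real. \<epsilon> ^ j) \<longlongrightarrow> 0 ^ j) (at_right 0)" by (intro tendsto_intros)
    then show "((\<lambda>\<epsilon>::real. \<epsilon> ^ j) \<longlongrightarrow> 0) (at_right 0)" using ij by simp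
  qed
  have rr: "((\<lambda>\<epsilon>. r (\<epsilon> ^ j)) \<longlongrightarrow> 0) (at_right 0)"
    using filterlim_compose[OF r0 lp] .
  have L1: "((\<lambda>\<epsilon>::real. \<epsilon> ^ (j - i) *\<^sub>R (P w + P (r (\<epsilon> ^ j)))) \<longlongrightarrow> 0 ^ (j - i) *\<^sub>R (P w + P 0)) (at_right 0)"
    by (intro tendsto_intros P.tendsto rr)
  have L2: "0 ^ (j - i) *\<^sub>R (P w + P 0) = (if j = i then P w else 0)"
    using ij by auto
  have L3: "\<forall>\<^sub>F \<epsilon> in at_right 0. \<epsilon> ^ (j - i) *\<^sub>R (P w + P (r (\<epsilon> ^ j))) = inverse (\<epsilon> ^ i) *\<^sub>R P (g (\<epsilon> ^ j))"
  proof (rule eventually_at_rightI[of 0 "1::real"])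
    fix \<epsilon> :: real assume "\<epsilon> \<in> {0<..<1}"
    then have e: "\<epsilon> > 0" by simp
    define s where "s = \<epsilon> ^ j"
    have s: "s \<noteq> 0" using e by (simp add: s_def)
    have gs: "g s = s *\<^sub>R (w + r s)" using s by (simp add: r_def scaleR_add_right)
    have pw: "inverse (\<epsilon> ^ i) * s = \<epsilon> ^ (j - i)"
      using e ij by (simp add: s_def power_diff field_simps)
    have "inverse (\<epsilon> ^ i) *\<^sub>R P (g s) = (inverse (\<epsilon> ^ i) * s) *\<^sub>R (P w + P (r s))"
      by (simp add: gs P.scaleR P.add)
    also have "\<dots> = \<epsilon> ^ (j - i) *\<^sub>R (P w + P (r s))" by (simp only: pw)
    finally have "inverse (\<epsilon> ^ i) *\<^sub>R P (g s) = \<epsilon> ^ (j - i) *\<^sub>R (P w + P (r s))" .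
    then show "\<epsilon> ^ (j - i) *\<^sub>R (P w + P (r (\<epsilon> ^ j))) = inverse (\<epsilon> ^ i) *\<^sub>R P (g (\<epsilon> ^ j))"
      by (simp only: s_def)
  qed simp
  show ?thesis using Lim_transform_eventually[OF L1 L3] unfolding L2 .
qed

lemma sum_supp:
  fixes c :: "nat \<Rightarrow> 'a::real_vector"
  assumes "finite A" "{k. c k \<noteq> 0} \<subseteq> A"
  shows "(\<Sum>k\<in>{k. c k \<noteq> 0}. c k) = (\<Sum>k\<in>A. c k)"
  using assms by (intro sum.mono_neutral_left) auto

lemma decomp_add:
  assumes "decomp V x c" "decomp V y d" "\<forall>i. subspace (V i)"
  shows "decomp V (x + y) (\<lambda>k. c k + d k)"
proof -
  let ?A = "{k. c k \<noteq> 0} \<union> {k. d k \<noteq> 0}"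
  have cx: "\<forall>k. c k \<in> V k" "finite {k. c k \<noteq> 0}" "x = (\<Sum>k\<in>{k. c k \<noteq> 0}. c k)"
    using assms(1) unfolding decomp_def by blast+
  have dy: "\<forall>k. d k \<in> V k" "finite {k. d k \<noteq> 0}" "y = (\<Sum>k\<in>{k. d k \<noteq> 0}. d k)"
    using assms(2) unfolding decomp_def by blast+
  have fA: "finite ?A" using cx(2) dy(2) by blast
  have sub: "{k. c k + d k \<noteq> 0} \<subseteq> ?A" by auto
  have "(\<Sum>k\<in>{k. c k + d k \<noteq> 0}. c k + d k) = (\<Sum>k\<in>?A. c k + d k)"
    by (rule sum_supp[OF fA sub])
  also have "\<dots> = (\<Sum>k\<in>?A. c k) + (\<Sum>k\<in>?A. d k)" by (rule sum.distrib)
  also have "(\<Sum>k\<in>?A. c k) = x" unfolding cx(3) by (rule sum_supp[symmetric, OF fA]) blast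
  also have "(\<Sum>k\<in>?A. d k) = y" unfolding dy(3) by (rule sum_supp[symmetric, OF fA]) blast
  finally have s: "x + y = (\<Sum>k\<in>{k. c k + d k \<noteq> 0}. c k + d k)" by simp
  have m: "\<forall>k. c k + d k \<in> V k" using cx(1) dy(1) assms(3) by (simp add: subspace_add)
  have f: "finite {k. c k + d k \<noteq> 0}" using finite_subset[OF sub fA] .
  show ?thesis unfolding decomp_def using m f s by blast
qed

lemma decomp_scale:
  assumes "decomp V x c" "\<forall>i. subspace (V i)"
  shows "decomp V (a *\<^sub>R x) (\<lambda>k. a *\<^sub>R c k)"
proof -
  let ?A = "{k. c k \<noteq> 0}"
  have cx: "\<forall>k. c k \<in> V k" "finite {k. c k \<noteq> 0}" "x = (\<Sum>k\<in>{k. c k \<noteq> 0}. c k)"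
    using assms(1) unfolding decomp_def by blast+
  have sub: "{k. a *\<^sub>R c k \<noteq> 0} \<subseteq> ?A" by auto
  have "(\<Sum>k\<in>{k. a *\<^sub>R c k \<noteq> 0}. a *\<^sub>R c k) = (\<Sum>k\<in>?A. a *\<^sub>R c k)"
    by (rule sum_supp[OF cx(2) sub])
  also have "\<dots> = a *\<^sub>R (\<Sum>k\<in>?A. c k)" by (simp add: scaleR_sum_right)
  also have "(\<Sum>k\<in>?A. c k) = x" using cx(3) by simp
  finally have s: "a *\<^sub>R x = (\<Sum>k\<in>{k. a *\<^sub>R c k \<noteq> 0}. a *\<^sub>R c k)" by simp
  have m: "\<forall>k. a *\<^sub>R c k \<in> V k" using cx(1) assms(2) by (simp add: subspace_scale)
  have f: "finite {k. a *\<^sub>R c k \<noteq> 0}" using finite_subset[OF sub cx(2)] .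
  show ?thesis unfolding decomp_def using m f s by blast
qed

lemma grproj_linear:
  assumes "graded_decomp V"
  shows "linear (grproj V i)"
proof -
  have G: "(\<forall>i. subspace (V i)) \<and> V 0 = {0} \<and> finite {i. V i \<noteq> {0}} \<and> (\<forall>x. \<exists>!c. decomp V x c)"
    using assms unfolding graded_decomp_def .
  have sub: "\<forall>i. subspace (V i)" using G by (rule conjunct1)
  have u: "\<exists>!c. decomp V x c" for x using G[THEN conjunct2, THEN conjunct2, THEN conjunct2] by (rule spec)
  have th: "decomp V x (THE c. decomp V x c)" for x by (rule theI'[OF u])
  have eq: "(THE c. decomp V x c) = c" if "decomp V x c" for x c
    using u[of x] that by (metis the1_equality)
  show ?thesis
  proof (rule linearI)
    fix x y
    have E: "(THE c. decomp V (x + y) c) = (\<lambda>k. (THE c. decomp V x c) k + (THE c. decomp V y c) k)"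
      by (rule eq[OF decomp_add[OF th[of x] th[of y] sub]])
    show "grproj V i (x + y) = grproj V i x + grproj V i y"
      unfolding grproj_def E by (rule refl)
  next
    fix a x
    have E: "(THE c. decomp V (a *\<^sub>R x) c) = (\<lambda>k. a *\<^sub>R (THE c. decomp V x c) k)"
      by (rule eq[OF decomp_scale[OF th[of x] sub]])
    show "grproj V i (a *\<^sub>R x) = a *\<^sub>R grproj V i x"
      unfolding grproj_def E by (rule refl)
  qed
qed

lemma smooth_diff:
  fixes f :: "'a::euclidean_space \<Rightarrow> 'b::real_normed_vector"
  assumes "smooth_on U f" "open U" "y \<in> U"
  shows "\<exists>f'. (f has_derivative f') (at y)"
proof -
  obtain F where F: "f \<in> F" "\<forall>g\<in>F. continuous_on U g \<and>
        (\<forall>v. \<exists>g'\<in>F. \<forall>y\<in>U. ((\<lambda>t. g (y + t *\<^sub>R v)) has_vector_derivative g' y) (at 0))"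
    using assms(1) unfolding smooth_on_def by blast
  then have "\<forall>v. \<exists>g'. g' \<in> F \<and> (\<forall>y\<in>U. ((\<lambda>t. f (y + t *\<^sub>R v)) has_vector_derivative g' y) (at 0))"
    by blast
  then have "\<exists>D. \<forall>v. D v \<in> F \<and> (\<forall>y\<in>U. ((\<lambda>t. f (y + t *\<^sub>R v)) has_vector_derivative D v y) (at 0))"
    by (rule choice)
  then obtain D where D0: "\<forall>v. D v \<in> F \<and> (\<forall>y\<in>U. ((\<lambda>t. f (y + t *\<^sub>R v)) has_vector_derivative D v y) (at 0))"
    by blast
  have D: "\<And>v. D v \<in> F" "\<And>v y. y \<in> U \<Longrightarrow> ((\<lambda>t. f (y + t *\<^sub>R v)) has_vector_derivative D v y) (at 0)"
    using D0 by auto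
  have Dc: "\<And>v. continuous_on U (D v)" using D(1) F(2) by blast
  show ?thesis using C1[of U f D, OF D(2) Dc assms(2,3)] by blast
qed



lemma gg_facts:
  assumes "graded_group m V"
  shows "\<And>x y z. m (m x y) z = m x (m y z)" "\<And>x. m 0 x = x" "\<And>x. m x 0 = x"
    "\<And>a. m (-a) a = 0" "\<And>a. m a (-a) = 0"
    "smooth_on UNIV (\<lambda>p. m (fst p) (snd p))" "graded_decomp V"
proof -
  have G: "(\<forall>x y z. m (m x y) z = m x (m y z)) \<and>
     (\<forall>x. m 0 x = x \<and> m x 0 = x) \<and>
     (\<forall>X s t. m (s *\<^sub>R X) (t *\<^sub>R X) = (s + t) *\<^sub>R X) \<and>
     smooth_on UNIV (\<lambda>p. m (fst p) (snd p)) \<and>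
     graded_decomp V \<and>
     (\<forall>i j X Y. X \<in> V i \<longrightarrow> Y \<in> V j \<longrightarrow> lie_bracket m X Y \<in> V (i + j))"
    using assms unfolding graded_group_def .
  note a = G[THEN conjunct1] and u = G[THEN conjunct2, THEN conjunct1]
    and o = G[THEN conjunct2, THEN conjunct2, THEN conjunct1]
    and s = G[THEN conjunct2, THEN conjunct2, THEN conjunct2, THEN conjunct1]
    and g = G[THEN conjunct2, THEN conjunct2, THEN conjunct2, THEN conjunct2, THEN conjunct1]
  show "\<And>x y z. m (m x y) z = m x (m y z)" using a by simp
  show "\<And>x. m 0 x = x" "\<And>x. m x 0 = x" using u by simp_all
  show "m (-a) a = 0" for a using o[rule_format, of "-1" a 1] by simp
  show "m a (-a) = 0" for a using o[rule_format, of 1 a "-1"] by simp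
  show "smooth_on UNIV (\<lambda>p. m (fst p) (snd p))" by (rule s)
  show "graded_decomp V" by (rule g)
qed

lemma m_diff:
  fixes m :: "'g::euclidean_space \<Rightarrow> 'g \<Rightarrow> 'g"
  assumes "graded_group m V"
  shows "\<exists>A. (m a has_derivative A) (at z)"
proof -
  have s: "smooth_on UNIV (\<lambda>p. m (fst p) (snd p))" by (rule gg_facts(6)[OF assms])
  obtain M where M: "((\<lambda>p. m (fst p) (snd p)) has_derivative M) (at (a, z))"
    using smooth_diff[OF s open_UNIV UNIV_I] by blast
  have P: "((\<lambda>w. (a, w)) has_derivative (\<lambda>h. (0, h))) (at z)"
    by (intro has_derivative_Pair has_derivative_const has_derivative_ident)
  have "(((\<lambda>p. m (fst p) (snd p)) \<circ> (\<lambda>w. (a, w))) has_derivative (M \<circ> (\<lambda>h. (0, h)))) (at z)"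
    by (rule diff_chain_at[OF P M])
  moreover have "((\<lambda>p. m (fst p) (snd p)) \<circ> (\<lambda>w. (a, w))) = m a" by (simp add: fun_eq_iff)
  ultimately show ?thesis by auto
qed

theorem lemma2p6:
  fixes mG :: "'g::euclidean_space \<Rightarrow> 'g \<Rightarrow> 'g" and VG :: "nat \<Rightarrow> 'g set"
    and mH :: "'h::euclidean_space \<Rightarrow> 'h \<Rightarrow> 'h" and VH :: "nat \<Rightarrow> 'h set"
    and Phi :: "'g \<Rightarrow> 'h" and U :: "'g set" and x :: 'g
    and i j :: nat and V :: 'g
  assumes "graded_group mG VG" and "graded_group mH VH"
    and "open U" and "smooth_on U Phi" and "x \<in> U"
    and "i \<ge> 1" and "j \<ge> 1" and "V \<in> VG j"
  shows "(j > i \<longrightarrow>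
            ((\<lambda>\<epsilon>::real. inverse (\<epsilon> ^ i) *\<^sub>R grproj VH i (shifted_map mG mH Phi x ((\<epsilon> ^ j) *\<^sub>R V)))
               \<longlongrightarrow> 0) (at_right 0))
       \<and> (j = i \<longrightarrow>
            ((\<lambda>\<epsilon>::real. inverse (\<epsilon> ^ i) *\<^sub>R grproj VH i (shifted_map mG mH Phi x ((\<epsilon> ^ j) *\<^sub>R V)))
               \<longlongrightarrow> grproj VH i (left_diff mG mH Phi x V)) (at_right 0))"
proof -
  note gG = assms(1) and gH = assms(2)
  obtain A where A: "(mG x has_derivative A) (at 0)" using m_diff[OF gG] by blast
  obtain B where B: "(Phi has_derivative B) (at x)" using smooth_diff[OF assms(4,3,5)] by blast
  obtain C where C: "(mH (- Phi x) has_derivative C) (at (Phi x))" using m_diff[OF gH] by blast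
  obtain E where E: "(mH (Phi x) has_derivative E) (at 0)" using m_diff[OF gH] by blast
  have mG0: "mG x 0 = x" by (rule gg_facts(3)[OF gG])
  have mH0: "mH (Phi x) 0 = Phi x" by (rule gg_facts(3)[OF gH])
  have mHi: "mH (- Phi x) (Phi x) = 0" by (rule gg_facts(4)[OF gH])
  have CE: "C \<circ> E = id"
  proof -
    have "((mH (- Phi x) \<circ> mH (Phi x)) has_derivative (C \<circ> E)) (at 0)"
      using diff_chain_at[OF E] C mH0 by simp
    moreover have "mH (- Phi x) \<circ> mH (Phi x) = id"
      using gg_facts(1,2,4)[OF gH] by (simp add: fun_eq_iff flip: gg_facts(1)[OF gH])
    ultimately have "(id has_derivative (C \<circ> E)) (at 0)" by simp
    moreover have "(id has_derivative id) (at (0::'h))" by (rule has_derivative_id)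
    ultimately show ?thesis using has_derivative_unique by blast
  qed
  have EC: "E \<circ> C = id"
  proof -
    have "((mH (Phi x) \<circ> mH (- Phi x)) has_derivative (E \<circ> C)) (at (Phi x))"
      using diff_chain_at[OF C] E mHi by simp
    moreover have "mH (Phi x) \<circ> mH (- Phi x) = id"
      using gg_facts(1,2,5)[OF gH] by (simp add: fun_eq_iff flip: gg_facts(1)[OF gH])
    ultimately have "(id has_derivative (E \<circ> C)) (at (Phi x))" by simp
    moreover have "(id has_derivative id) (at (Phi x))" by (rule has_derivative_id)
    ultimately show ?thesis using has_derivative_unique by blast
  qed
  have invE: "inv E = C" by (rule inv_unique_comp[OF EC CE])
  have LD: "left_diff mG mH Phi x = C \<circ> B \<circ> A"
    unfolding left_diff_def
    using frechet_derivative_at[OF A] frechet_derivative_at[OF B] frechet_derivative_at[OF E] invE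
    by simp
  define w where "w = C (B (A V))"
  define g where "g t = shifted_map mG mH Phi x (t *\<^sub>R V)" for t :: real
  have gdef: "g = mH (- Phi x) \<circ> Phi \<circ> mG x \<circ> (\<lambda>t. t *\<^sub>R V)"
    by (simp add: g_def fun_eq_iff shifted_map_def)
  have lA: "linear A" "linear B" "linear C"
    using A B C has_derivative_linear by blast+
  have gd: "(g has_derivative (\<lambda>t. t *\<^sub>R w)) (at 0)"
  proof -
    have s: "((\<lambda>t::real. t *\<^sub>R V) has_derivative (\<lambda>t. t *\<^sub>R V)) (at 0)"
      by (auto intro!: derivative_eq_intros)
    have A': "(mG x has_derivative A) (at (0 *\<^sub>R V))" using A by simp
    have B': "(Phi has_derivative B) (at (mG x (0 *\<^sub>R V)))" using B mG0 by simp
    have C': "(mH (- Phi x) has_derivative C) (at (Phi (mG x (0 *\<^sub>R V))))" using C mG0 by simp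
    have "((mH (- Phi x) \<circ> Phi \<circ> mG x \<circ> (\<lambda>t. t *\<^sub>R V)) has_derivative (C \<circ> B \<circ> A \<circ> (\<lambda>t. t *\<^sub>R V))) (at 0)"
    proof -
      have 1: "((mG x \<circ> (\<lambda>t. t *\<^sub>R V)) has_derivative (A \<circ> (\<lambda>t. t *\<^sub>R V))) (at 0)"
        by (rule diff_chain_at[OF s A'])
      have 2: "((Phi \<circ> (mG x \<circ> (\<lambda>t. t *\<^sub>R V))) has_derivative (B \<circ> (A \<circ> (\<lambda>t. t *\<^sub>R V)))) (at 0)"
        by (rule diff_chain_at[OF 1]) (use B' in simp)
      have 3: "((mH (- Phi x) \<circ> (Phi \<circ> (mG x \<circ> (\<lambda>t. t *\<^sub>R V)))) has_derivative (C \<circ> (B \<circ> (A \<circ> (\<lambda>t. t *\<^sub>R V))))) (at 0)"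
        by (rule diff_chain_at[OF 2]) (use C' in simp)
      then show ?thesis by (simp add: comp_assoc)
    qed
    moreover have "C \<circ> B \<circ> A \<circ> (\<lambda>t. t *\<^sub>R V) = (\<lambda>t. t *\<^sub>R w)"
      using lA by (simp add: fun_eq_iff w_def linear_scale)
    ultimately show ?thesis unfolding gdef by simp
  qed
  have g0: "g 0 = 0" using mG0 mHi by (simp add: g_def shifted_map_def)
  have P: "bounded_linear (grproj VH i)"
    using grproj_linear[OF gg_facts(7)[OF gH], of i] linear_conv_bounded_linear by blast
  have main: "i \<le> j \<Longrightarrow> ((\<lambda>\<epsilon>. inverse (\<epsilon> ^ i) *\<^sub>R grproj VH i (g (\<epsilon> ^ j))) \<longlongrightarrow> (if j = i then grproj VH i w else 0)) (at_right 0)"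
    by (rule lim_lemma[OF gd g0 P _ assms(7)])
  show ?thesis
  proof (intro conjI impI)
    assume "j > i"
    then show "((\<lambda>\<epsilon>::real. inverse (\<epsilon> ^ i) *\<^sub>R grproj VH i (shifted_map mG mH Phi x ((\<epsilon> ^ j) *\<^sub>R V)))
               \<longlongrightarrow> 0) (at_right 0)"
      using main by (simp add: g_def)
  next
    assume "j = i"
    then show "((\<lambda>\<epsilon>::real. inverse (\<epsilon> ^ i) *\<^sub>R grproj VH i (shifted_map mG mH Phi x ((\<epsilon> ^ j) *\<^sub>R V)))
               \<longlongrightarrow> grproj VH i (left_diff mG mH Phi x V)) (at_right 0)"
      using main by (simp add: g_def LD w_def)
  qed
qed

end
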